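(* Let $f^{cl}_{\pi_\star}$ be $\eta$-locally $\delta$-ISS for some $\eta>0$, with gain $\gamma$ satisfying $\gamma(x)\le O(x^{1/r})$ as $x\to0^+$ for some $r\ge1$. Fix a test policy $\pi$ and initial condition $\xi\in\mathcal X$, and let $p\in\mathbb N$ satisfy $p+1-r>0$. Assume $\pi$ and $\pi_\star$ are $p$-times continuously differentiable and there is $L_{\partial^p\pi}\ge0$ with \[\Big\|\bar\pi(x)-\sum_{j=0}^p\tfrac1{j!}\partial_x^j\bar\pi(x_0)(x-x_0)^{\otimes j}\Big\|\le\tfrac{L_{\partial^p\pi}}{(p+1)!}\|x-x_0\|^{p+1}\] for all $x,x_0$ and $\bar\pi\in\{\pi,\pi_\star\}$. Choose $\mu,\alpha>0$ with $\alpha\le1/2$ such that \[2\tfrac{L_{\partial^p\pi}}{(p+1)!}x^{p+1}+(x/\mu)^r\le\gamma^{-1}(x)\quad\text{for all }0\le x\le\alpha.\] If \[\max_{0\le t\le T-1}\max_{0\le j\le p}\mu\Big(\tfrac{2}{j!}\|\partial_x^j\Delta_t^{\pi_\star}(\xi;\pi)\|\Big)^{1/r}\le\alpha,\] \[\max_{0\le t\le T-1}\max_{0\le j\le p}\Big[\tfrac{2L_{\partial^p\pi}\mu^{p+1}}{(p+1)!}\Big(\tfrac{2}{j!}\|\partial_x^j\Delta_t^{\pi_\star}(\xi;\pi)\|\Big)^{\frac{p+1}{r}}+\tfrac{2}{j!}\|\partial_x^j\Delta_t^{\pi_\star}(\xi;\pi)\|\Big]\le\eta,\] then for all $1\le t\le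 T$, \[\|x_t^{\pi_\star}(\xi)-x_t^\pi(\xi)\|\le\max_{0\le k\le t-1}\max_{0\le j\le p}\mu\Big(\tfrac{2}{j!}\|\partial_x^j\Delta_k^{\pi_\star}(\xi;\pi)\|\Big)^{1/r}.\]
   Context: Dynamics $x_{t+1}=f(x_t,u_t)$, $x_0=\xi$, $x_t\in\mathbb R^d,u_t\in\mathbb R^m$. For a policy $\pi$, perturbed closed loop $x_{t+1}=f^{cl}_\pi(x_t,\Delta_t):=f(x_t,\pi(x_t)+\Delta_t)$, states $x_t^\pi(\xi,\{\Delta_s\})$, $x_t^\pi(\xi):=x_t^\pi(\xi,\{0\})$. Initial conditions lie in a compact set $\mathcal X$. Norms: Euclidean on vectors, operator norm on matrices/tensors; $\otimes$ is the tensor power. Class $\mathcal K$/$\mathcal{KL}$ functions as standard. $f^{cl}_\pi$ is $\eta$-locally $\delta$-ISS if there are class $\mathcal{KL}$ $\beta$ and class $\mathcal K$ $\gamma$ with $\|x_t^\pi(\xi_1;\{\Delta_s\}_{s=0}^{t-1})-x_t^\pi(\xi_2;\{0\})\|\le\beta(\|\xi_1-\xi_2\|,t)+\gamma(\max_{0\le k\le t-1}\|\Delta_k\|)$ for all $\xi_1,\xi_2\in\mathcal X$, $t\in\mathbb N$, and perturbations with $\sup_t\|\Delta_t\|\le\eta$. $\gamma^{-1}$ is the inverse of $\gamma$ on its range (with $\gamma^{-1}(x)=+\infty$ for $x\ge\sup\gamma$). $\pi_\star$ is the expert policy, and $\partial_x^j\Delta_t^{\pi_\star}(\xi;\pi):=\partial_x^j\pi(x_t^{\pi_\star}(\xi))-\partial_x^j\pi_\star(x_t^{\pi_\star}(\xi))$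 (the $j$-th derivative of the policies with respect to their argument, evaluated on the expert trajectory). *)

theory Defs
  imports "HOL-Analysis.Analysis" "HOL-Library.Landau_Symbols"
begin

fun traj :: "('x \<Rightarrow> 'u \<Rightarrow> 'x) \<Rightarrow> ('x \<Rightarrow> 'u::plus) \<Rightarrow> 'x \<Rightarrow> (nat \<Rightarrow> 'u) \<Rightarrow> nat \<Rightarrow> 'x" where
  "traj f \<pi> \<xi> \<Delta> 0 = \<xi>"
| "traj f \<pi> \<xi> \<Delta> (Suc t) = f (traj f \<pi> \<xi> \<Delta> t) (\<pi> (traj f \<pi> \<xi> \<Delta> t) + \<Delta> t)"

definition ctraj :: "('x \<Rightarrow> 'u \<Rightarrow> 'x) \<Rightarrow> ('x \<Rightarrow> 'u::monoid_add) \<Rightarrow> 'x \<Rightarrow> nat \<Rightarrow> 'x" where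
  "ctraj f \<pi> \<xi> t = traj f \<pi> \<xi> (\<lambda>_. 0) t"

definition class_K :: "(real \<Rightarrow> real) \<Rightarrow> bool" where
  "class_K \<gamma> \<longleftrightarrow> \<gamma> 0 = 0 \<and> continuous_on {0..} \<gamma> \<and> strict_mono_on {0..} \<gamma>"

definition class_KL :: "(real \<Rightarrow> nat \<Rightarrow> real) \<Rightarrow> bool" where
  "class_KL \<beta> \<longleftrightarrow> (\<forall>t. class_K (\<lambda>s. \<beta> s t)) \<and>
     (\<forall>s\<ge>0. antimono (\<lambda>t. \<beta> s t) \<and> (\<lambda>t. \<beta> s t) \<longlonglongrightarrow> 0)"

definition maxpert :: "(nat \<Rightarrow> 'u::real_normed_vector) \<Rightarrow> nat \<Rightarrow> real" where
  "maxpert \<Delta> t = Max (insert 0 {norm (\<Delta> k) | k. k < t})"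

definition locally_delta_ISS ::
  "('x::real_normed_vector \<Rightarrow> 'u::real_normed_vector \<Rightarrow> 'x) \<Rightarrow> ('x \<Rightarrow> 'u) \<Rightarrow> 'x set \<Rightarrow> real
    \<Rightarrow> (real \<Rightarrow> nat \<Rightarrow> real) \<Rightarrow> (real \<Rightarrow> real) \<Rightarrow> bool" where
  "locally_delta_ISS f \<pi> X \<eta> \<beta> \<gamma> \<longleftrightarrow> class_KL \<beta> \<and> class_K \<gamma> \<and>
     (\<forall>\<xi>1\<in>X. \<forall>\<xi>2\<in>X. \<forall>\<Delta> t. (\<forall>s. norm (\<Delta> s) \<le> \<eta>) \<longrightarrow>
        norm (traj f \<pi> \<xi>1 \<Delta> t - ctraj f \<pi> \<xi>2 t) \<le> \<beta> (norm (\<xi>1 - \<xi>2)) t + \<gamma> (maxpert \<Delta> t))"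

definition gamma_inv :: "(real \<Rightarrow> real) \<Rightarrow> real \<Rightarrow> ereal" where
  "gamma_inv \<gamma> x = (if x \<in> \<gamma> ` {0..} then ereal (THE y. y \<ge> 0 \<and> \<gamma> y = x) else \<infinity>)"

text \<open>Operator norm of a j-linear map T (given as a function on lists of j vectors).\<close>
definition tnorm :: "('a::real_normed_vector list \<Rightarrow> 'b::real_normed_vector) \<Rightarrow> nat \<Rightarrow> real" where
  "tnorm T j = (SUP hs\<in>{hs. length hs = j \<and> (\<forall>h\<in>set hs. norm h \<le> 1)}. norm (T hs))"

text \<open>D j x [h1,...,hj] is the j-th Frechet derivative of g at x applied to h1,...,hj;
  the family D witnesses that g is p-times continuously differentiable.\<close>
definition higher_derivs :: "nat \<Rightarrow> ('a::real_normed_vector \<Rightarrow> 'b::real_normed_vector)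
    \<Rightarrow> (nat \<Rightarrow> 'a \<Rightarrow> 'a list \<Rightarrow> 'b) \<Rightarrow> bool" where
  "higher_derivs p g D \<longleftrightarrow>
     (\<forall>x. D 0 x [] = g x) \<and>
     (\<forall>j<p. \<forall>x hs. length hs = j \<longrightarrow>
        ((\<lambda>y. D j y hs) has_derivative (\<lambda>h. D (Suc j) x (h # hs))) (at x)) \<and>
     (\<forall>x. ((\<lambda>y. tnorm (\<lambda>hs. D p y hs - D p x hs) p) \<longlongrightarrow> 0) (at x))"

definition taylor_poly :: "nat \<Rightarrow> (nat \<Rightarrow> 'a::real_normed_vector \<Rightarrow> 'a list \<Rightarrow> 'b::real_normed_vector)
    \<Rightarrow> 'a \<Rightarrow> 'a \<Rightarrow> 'b" where
  "taylor_poly p D x0 x = (\<Sum>j\<le>p. (1 / fact j) *\<^sub>R D j x0 (replicate j (x - x0)))"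

end

theory Submission
  imports Defs
begin

fun mlin :: "nat \<Rightarrow> ('a::real_normed_vector list \<Rightarrow> 'b::real_normed_vector) \<Rightarrow> bool" where
  "mlin 0 T = True"
| "mlin (Suc j) T = ((\<forall>hs. length hs = j \<longrightarrow> linear (\<lambda>h. T (h # hs))) \<and> (\<forall>h. mlin j (\<lambda>hs. T (h # hs))))"

lemma mlin_deriv:
  assumes "\<And>z. mlin j (F z)"
    and "\<And>hs. length hs = j \<Longrightarrow> ((\<lambda>z. F z hs) has_derivative (\<lambda>h. G h hs)) (at y)"
  shows "mlin j (G h)"
  using assms
proof (induction j arbitrary: F G h)
  case 0
  then show ?case by simp
next
  case (Suc j)
  have lin: "linear (\<lambda>h'. G h (h' # hs))" if len: "length hs = j" for hs
  proof (rule linearI)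
    fix b1 b2
    have l: "linear (\<lambda>h. F z (h # hs))" for z using Suc.prems(1)[of z] len by simp
    have d1: "((\<lambda>z. F z (b1 # hs)) has_derivative (\<lambda>h. G h (b1 # hs))) (at y)"
      using Suc.prems(2)[of "b1 # hs"] len by simp
    have d2: "((\<lambda>z. F z (b2 # hs)) has_derivative (\<lambda>h. G h (b2 # hs))) (at y)"
      using Suc.prems(2)[of "b2 # hs"] len by simp
    have d3: "((\<lambda>z. F z ((b1 + b2) # hs)) has_derivative (\<lambda>h. G h ((b1 + b2) # hs))) (at y)"
      using Suc.prems(2)[of "(b1 + b2) # hs"] len by simp
    have e: "(\<lambda>z. F z ((b1 + b2) # hs)) = (\<lambda>z. F z (b1 # hs) + F z (b2 # hs))"
      by (rule ext) (simp add: linear_add[OF l])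
    have d4: "((\<lambda>z. F z ((b1 + b2) # hs)) has_derivative (\<lambda>h. G h (b1 # hs) + G h (b2 # hs))) (at y)"
      unfolding e by (rule has_derivative_add[OF d1 d2])
    from has_derivative_unique[OF d3 d4]
    show "G h ((b1 + b2) # hs) = G h (b1 # hs) + G h (b2 # hs)" by meson
  next
    fix r b
    have l: "linear (\<lambda>h. F z (h # hs))" for z using Suc.prems(1)[of z] len by simp
    have d1: "((\<lambda>z. F z (b # hs)) has_derivative (\<lambda>h. G h (b # hs))) (at y)"
      using Suc.prems(2)[of "b # hs"] len by simp
    have d3: "((\<lambda>z. F z ((r *\<^sub>R b) # hs)) has_derivative (\<lambda>h. G h ((r *\<^sub>R b) # hs))) (at y)"
      using Suc.prems(2)[of "(r *\<^sub>R b) # hs"] len by simp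
    have e: "(\<lambda>z. F z ((r *\<^sub>R b) # hs)) = (\<lambda>z. r *\<^sub>R F z (b # hs))"
      by (rule ext) (simp add: linear_scale[OF l])
    have d4: "((\<lambda>z. F z ((r *\<^sub>R b) # hs)) has_derivative (\<lambda>h. r *\<^sub>R G h (b # hs))) (at y)"
      unfolding e by (rule has_derivative_scaleR_right[OF d1])
    from has_derivative_unique[OF d3 d4]
    show "G h ((r *\<^sub>R b) # hs) = r *\<^sub>R G h (b # hs)" by meson
  qed
  have "mlin j (\<lambda>hs. G h (h' # hs))" for h'
    by (rule Suc.IH[of "\<lambda>z hs. F z (h' # hs)" "\<lambda>h hs. G h (h' # hs)"])
       (use Suc.prems in auto)
  then show ?case using lin by simp
qed

lemma higher_derivs_mlin:
  assumes "higher_derivs p g D" "j \<le> p"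
  shows "mlin j (D j x)"
  using assms(2)
proof (induction j arbitrary: x)
  case 0
  then show ?case by simp
next
  case (Suc j)
  have dj: "\<And>x hs. length hs = j \<Longrightarrow> ((\<lambda>y. D j y hs) has_derivative (\<lambda>h. D (Suc j) x (h # hs))) (at x)"
    using assms(1) Suc.prems unfolding higher_derivs_def by auto
  have lin: "linear (\<lambda>h. D (Suc j) x (h # hs))" if "length hs = j" for hs
    using has_derivative_bounded_linear[OF dj[OF that]] bounded_linear.linear by blast
  have "mlin j (\<lambda>hs. D (Suc j) x (h # hs))" for h
    by (rule mlin_deriv[where F="D j" and G="\<lambda>h hs. D (Suc j) x (h # hs)" and y=x])
       (use Suc.IH Suc.prems dj in auto)
  then show ?case using lin by simp
qed

lemma mlin_diff:
  assumes "mlin j T" "mlin j S"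
  shows "mlin j (\<lambda>hs. T hs - S hs)"
  using assms
proof (induction j arbitrary: T S)
  case 0
  then show ?case by simp
next
  case (Suc j)
  then show ?case by (auto intro: linear_compose_sub)
qed

lemma mlin_homog:
  assumes "mlin j T" "length hs = j"
  shows "T (map ((*\<^sub>R) c) hs) = c ^ j *\<^sub>R T hs"
  using assms
proof (induction j arbitrary: T hs)
  case 0
  then show ?case by simp
next
  case (Suc j)
  then obtain h hs' where hs: "hs = h # hs'" and len: "length hs' = j"
    by (cases hs) auto
  have lin: "linear (\<lambda>h. T (h # map ((*\<^sub>R) c) hs'))" using Suc.prems len by simp
  have "T (map ((*\<^sub>R) c) hs) = c *\<^sub>R T (h # map ((*\<^sub>R) c) hs')"
    using linear_scale[OF lin] hs by simp
  also have "T (h # map ((*\<^sub>R) c) hs') = c ^ j *\<^sub>R T (h # hs')"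
    using Suc.IH[of "\<lambda>hs. T (h # hs)" hs'] Suc.prems len by simp
  finally show ?case using hs by simp
qed

lemma prod_list_le_1:
  assumes "\<forall>x\<in>set xs. 0 \<le> x \<and> x \<le> (1::real)"
  shows "prod_list xs \<le> 1" "0 \<le> prod_list xs"
  using assms by (induction xs) (auto intro: mult_le_one)

lemma mlin_bound:
  assumes "mlin j (T :: 'a::euclidean_space list \<Rightarrow> 'b::real_normed_vector)"
  shows "\<exists>K\<ge>0. \<forall>hs. length hs = j \<longrightarrow> norm (T hs) \<le> K * prod_list (map norm hs)"
  using assms
proof (induction j arbitrary: T)
  case 0
  then show ?case by (intro exI[of _ "norm (T [])"]) auto
next
  case (Suc j)
  have "\<forall>b\<in>Basis. \<exists>K\<ge>0. \<forall>hs. length hs = j \<longrightarrow> norm (T (b # hs)) \<le> K * prod_list (map norm hs)"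
    using Suc by auto
  then obtain Kf where Kf: "\<And>b. b \<in> Basis \<Longrightarrow> Kf b \<ge> 0 \<and> (\<forall>hs. length hs = j \<longrightarrow> norm (T (b # hs)) \<le> Kf b * prod_list (map norm hs))"
    by (metis (no_types, lifting) bchoice)
  show ?case
  proof (intro exI[of _ "\<Sum>b\<in>Basis. Kf b"] conjI allI impI)
    show "0 \<le> (\<Sum>b\<in>Basis. Kf b)" using Kf by (simp add: sum_nonneg)
    fix hs :: "'a list" assume "length hs = Suc j"
    then obtain h hs' where hs: "hs = h # hs'" and len: "length hs' = j" by (cases hs) auto
    have lin: "linear (\<lambda>h. T (h # hs'))" using Suc.prems len by simp
    have P0: "0 \<le> prod_list (map norm hs')"
    proof -
      have "\<forall>x\<in>set (map norm hs'). 0 \<le> x" by auto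
      then show ?thesis by (induction hs') auto
    qed
    have e1: "T ((\<Sum>b\<in>Basis. (h \<bullet> b) *\<^sub>R b) # hs') = (\<Sum>b\<in>Basis. (h \<bullet> b) *\<^sub>R T (b # hs'))"
      by (simp only: linear_sum[OF lin] linear_scale[OF lin])
    have "T (h # hs') = (\<Sum>b\<in>Basis. (h \<bullet> b) *\<^sub>R T (b # hs'))"
      using e1 by (simp only: euclidean_representation)
    then have "norm (T (h # hs')) \<le> (\<Sum>b\<in>Basis. norm ((h \<bullet> b) *\<^sub>R T (b # hs')))"
      by (metis norm_sum)
    also have "\<dots> \<le> (\<Sum>b\<in>Basis. norm h * (Kf b * prod_list (map norm hs')))"
    proof (rule sum_mono)
      fix b :: 'a assume b: "b \<in> Basis"
      have "norm ((h \<bullet> b) *\<^sub>R T (b # hs')) = \<bar>h \<bullet> b\<bar> * norm (T (b # hs'))" by simp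
      also have "\<dots> \<le> norm h * (Kf b * prod_list (map norm hs'))"
        using Kf[OF b] len Basis_le_norm[OF b, of h]
        by (intro mult_mono) auto
      finally show "norm ((h \<bullet> b) *\<^sub>R T (b # hs')) \<le> norm h * (Kf b * prod_list (map norm hs'))" .
    qed
    also have "\<dots> = (\<Sum>b\<in>Basis. Kf b) * prod_list (map norm hs)"
      using hs by (simp add: sum_distrib_left sum_distrib_right algebra_simps)
    finally show "norm (T hs) \<le> (\<Sum>b\<in>Basis. Kf b) * prod_list (map norm hs)" using hs by simp
  qed
qed

lemma tnorm_props:
  fixes T :: "'a::euclidean_space list \<Rightarrow> 'b::real_normed_vector"
  assumes "mlin j T"
  shows "norm (T (replicate j e)) \<le> tnorm T j * norm e ^ j" "0 \<le> tnorm T j"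
proof -
  define S where "S = {hs::'a list. length hs = j \<and> (\<forall>h\<in>set hs. norm h \<le> 1)}"
  obtain K where K: "K \<ge> 0" "\<And>hs. length hs = j \<Longrightarrow> norm (T hs) \<le> K * prod_list (map norm hs)"
    using mlin_bound[OF assms] by blast
  have bdd: "bdd_above ((\<lambda>hs. norm (T hs)) ` S)"
  proof (rule bdd_aboveI2)
    fix hs assume "hs \<in> S"
    then have l: "length hs = j" and n: "\<forall>h\<in>set hs. norm h \<le> 1" by (auto simp: S_def)
    have "prod_list (map norm hs) \<le> 1" using n by (intro prod_list_le_1) auto
    then show "norm (T hs) \<le> K" using K(2)[OF l] K(1) by (meson mult_left_le order_trans)
  qed
  have tn: "tnorm T j = (SUP hs\<in>S. norm (T hs))" by (simp add: tnorm_def S_def)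
  have up: "norm (T hs) \<le> tnorm T j" if "hs \<in> S" for hs
    unfolding tn by (rule cSUP_upper[OF that bdd])
  have "replicate j 0 \<in> S" by (auto simp: S_def)
  from up[OF this] show "0 \<le> tnorm T j" by (meson norm_ge_zero order_trans)
  then have tn0: "0 \<le> tnorm T j" .
  show "norm (T (replicate j e)) \<le> tnorm T j * norm e ^ j"
  proof (cases "j = 0")
    case True
    have "[] \<in> S" using True by (auto simp: S_def)
    then show ?thesis using up True by auto
  next
    case j: False
    show ?thesis
    proof (cases "e = 0")
      case True
      have "T (replicate j e) = T (map ((*\<^sub>R) 0) (replicate j e))" using True by simp
      also have "\<dots> = 0 ^ j *\<^sub>R T (replicate j e)" by (rule mlin_homog[OF assms]) simp
      finally have "T (replicate j e) = 0" using j by (simp add: power_0_left)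
      then show ?thesis using j True by (simp add: power_0_left)
    next
      case False
      define u where "u = e /\<^sub>R norm e"
      have ne: "norm u = 1" using False by (simp add: u_def)
      have eu: "e = norm e *\<^sub>R u" using False by (simp add: u_def)
      have "replicate j e = map ((*\<^sub>R) (norm e)) (replicate j u)"
        by (subst eu) simp
      then have "T (replicate j e) = norm e ^ j *\<^sub>R T (replicate j u)"
        using mlin_homog[OF assms, of "replicate j u" "norm e"] by (simp only:) simp
      moreover have "replicate j u \<in> S" using ne by (auto simp: S_def)
      ultimately show ?thesis using up[of "replicate j u"]
        by (simp add: mult.commute[of "norm e ^ j"] mult_right_mono)
    qed
  qed
qed

lemma gamma_le:
  assumes K: "class_K \<gamma>" and w: "0 \<le> w" and z: "0 \<le> z" and le: "ereal w \<le> gamma_inv \<gamma> z"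
  shows "\<gamma> w \<le> z"
proof (cases "z \<in> \<gamma> ` {0..}")
  case True
  then obtain y0 where y0: "y0 \<ge> 0" "\<gamma> y0 = z" by auto
  have sm: "strict_mono_on {0..} \<gamma>" using K by (simp add: class_K_def)
  have uniq: "(THE y. y \<ge> 0 \<and> \<gamma> y = z) = y0"
  proof (rule the_equality)
    show "y0 \<ge> 0 \<and> \<gamma> y0 = z" using y0 by simp
    fix y assume y: "y \<ge> 0 \<and> \<gamma> y = z"
    show "y = y0"
    proof (rule ccontr)
      assume "y \<noteq> y0"
      then have "y < y0 \<or> y0 < y" by auto
      then have "\<gamma> y < \<gamma> y0 \<or> \<gamma> y0 < \<gamma> y"
        using sm y y0 unfolding strict_mono_on_def by (metis atLeast_iff)
      then show False using y y0 by auto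
    qed
  qed
  have "w \<le> y0" using le True uniq by (simp add: gamma_inv_def)
  then show ?thesis using strict_mono_on_leD[OF sm, of w y0] w y0 by auto
next
  case False
  show ?thesis
  proof (rule ccontr)
    assume "\<not> \<gamma> w \<le> z"
    then have lt: "z < \<gamma> w" by simp
    have "\<gamma> 0 = 0" "continuous_on {0..} \<gamma>" using K by (auto simp: class_K_def)
    then have "\<exists>y\<ge>0. y \<le> w \<and> \<gamma> y = z"
      using lt z w by (intro IVT') (auto intro: continuous_on_subset)
    then show False using False by auto
  qed
qed

lemma geom_half: "(\<Sum>j\<le>p. (1/2::real) ^ j) = 2 - (1/2) ^ p"
  by (induction p) auto

lemma geom_le2:
  assumes "0 \<le> (x::real)" "x \<le> 1/2"
  shows "(\<Sum>j\<le>p. x ^ j) \<le> 2"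
proof -
  have "(\<Sum>j\<le>p. x ^ j) \<le> (\<Sum>j\<le>p. (1/2::real) ^ j)"
    by (intro sum_mono power_mono) (use assms in auto)
  also have "\<dots> \<le> 2" by (simp add: geom_half)
  finally show ?thesis .
qed

lemma traj_truncate:
  fixes f :: "'x \<Rightarrow> 'u::ab_group_add \<Rightarrow> 'x"
  assumes "n \<le> t"
  shows "traj f \<pi>s \<xi> (\<lambda>s. if s < t then \<pi> (ctraj f \<pi> \<xi> s) - \<pi>s (ctraj f \<pi> \<xi> s) else 0) n
         = ctraj f \<pi> \<xi> n"
  using assms
proof (induction n)
  case 0
  then show ?case by (simp add: ctraj_def)
next
  case (Suc n)
  then show ?case by (simp add: ctraj_def)
qed


theorem theorem2:
  fixes f :: "'x::euclidean_space \<Rightarrow> 'u::euclidean_space \<Rightarrow> 'x"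
    and \<pi> \<pi>s :: "'x \<Rightarrow> 'u"
    and D Ds :: "nat \<Rightarrow> 'x \<Rightarrow> 'x list \<Rightarrow> 'u"
    and X :: "'x set" and \<xi> :: 'x
    and \<eta> r L \<mu> \<alpha> :: real and p T :: nat
    and \<beta> :: "real \<Rightarrow> nat \<Rightarrow> real" and \<gamma> :: "real \<Rightarrow> real"
  defines "dn \<equiv> (\<lambda>t j. tnorm (\<lambda>hs. D j (ctraj f \<pi>s \<xi> t) hs - Ds j (ctraj f \<pi>s \<xi> t) hs) j)"
  assumes X: "compact X" and xi: "\<xi> \<in> X"
    and eta: "\<eta> > 0"
    and ISS: "locally_delta_ISS f \<pi>s X \<eta> \<beta> \<gamma>"
    and gamma_O: "\<gamma> \<in> O[at_right 0](\<lambda>x. x powr (1 / r))"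
    and r: "r \<ge> 1"
    and p: "real p + 1 - r > 0"
    and Dpi: "higher_derivs p \<pi> D" and Dpis: "higher_derivs p \<pi>s Ds"
    and L: "L \<ge> 0"
    and taylor_pi: "\<And>x x0. norm (\<pi> x - taylor_poly p D x0 x) \<le> L / fact (p + 1) * norm (x - x0) ^ (p + 1)"
    and taylor_pis: "\<And>x x0. norm (\<pi>s x - taylor_poly p Ds x0 x) \<le> L / fact (p + 1) * norm (x - x0) ^ (p + 1)"
    and mu: "\<mu> > 0" and alpha: "\<alpha> > 0" "\<alpha> \<le> 1 / 2"
    and gamma_inv_cond: "\<And>x. 0 \<le> x \<Longrightarrow> x \<le> \<alpha> \<Longrightarrow>
        ereal (2 * L / fact (p + 1) * x ^ (p + 1) + (x / \<mu>) powr r) \<le> gamma_inv \<gamma> x"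
    and H1: "\<And>t j. t < T \<Longrightarrow> j \<le> p \<Longrightarrow> \<mu> * (2 / fact j * dn t j) powr (1 / r) \<le> \<alpha>"
    and H2: "\<And>t j. t < T \<Longrightarrow> j \<le> p \<Longrightarrow>
        2 * L * \<mu> ^ (p + 1) / fact (p + 1) * (2 / fact j * dn t j) powr ((real p + 1) / r)
          + 2 / fact j * dn t j \<le> \<eta>"
  shows "\<forall>t. 1 \<le> t \<and> t \<le> T \<longrightarrow>
     norm (ctraj f \<pi>s \<xi> t - ctraj f \<pi> \<xi> t)
       \<le> Max {\<mu> * (2 / fact j * dn k j) powr (1 / r) | k j. k < t \<and> j \<le> p}"
proof -
  define xt where "xt = ctraj f \<pi> \<xi>"
  define yt where "yt = ctraj f \<pi>s \<xi>"
  define Dl where "Dl = (\<lambda>k. \<pi> (xt k) - \<pi>s (xt k))"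
  define v where "v = (\<lambda>k j. 2 / fact j * dn k j)"
  define c where "c = L / fact (p + 1)"
  define Z where "Z = (\<lambda>t. Max {\<mu> * (2 / fact j * dn k j) powr (1 / r) | k j. k < t \<and> j \<le> p})"
  have r0: "r > 0" using r by simp
  have c0: "c \<ge> 0" using L by (simp add: c_def)
  have mlinD: "mlin j (\<lambda>hs. D j y hs - Ds j y hs)" if "j \<le> p" for j y
    by (rule mlin_diff[OF higher_derivs_mlin[OF Dpi that] higher_derivs_mlin[OF Dpis that]])
  have dn_tn: "dn k j = tnorm (\<lambda>hs. D j (yt k) hs - Ds j (yt k) hs) j" for k j
    by (simp add: dn_def yt_def)
  have dn0: "0 \<le> dn k j" if "j \<le> p" for k j
    using tnorm_props(2)[OF mlinD[OF that]] dn_tn by simp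
  have v0: "0 \<le> v k j" if "j \<le> p" for k j
    using dn0[OF that] by (simp add: v_def)
  have Fd: "norm (Dl k) \<le> 2 * c * norm (xt k - yt k) ^ (p + 1)
      + (\<Sum>j\<le>p. 1 / fact j * dn k j * norm (xt k - yt k) ^ j)" for k
  proof -
    define e where "e = xt k - yt k"
    have tp: "taylor_poly p D (yt k) (xt k) - taylor_poly p Ds (yt k) (xt k)
        = (\<Sum>j\<le>p. (1 / fact j) *\<^sub>R (D j (yt k) (replicate j e) - Ds j (yt k) (replicate j e)))"
      by (simp add: taylor_poly_def e_def sum_subtractf[symmetric] scaleR_diff_right)
    have "norm (\<Sum>j\<le>p. (1 / fact j) *\<^sub>R (D j (yt k) (replicate j e) - Ds j (yt k) (replicate j e)))
        \<le> (\<Sum>j\<le>p. norm ((1 / fact j) *\<^sub>R (D j (yt k) (replicate j e) - Ds j (yt k) (replicate j e))))"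
      by (rule norm_sum)
    also have "\<dots> \<le> (\<Sum>j\<le>p. 1 / fact j * dn k j * norm e ^ j)"
    proof (rule sum_mono)
      fix j assume "j \<in> {..p}"
      then have jp: "j \<le> p" by simp
      have "norm (D j (yt k) (replicate j e) - Ds j (yt k) (replicate j e)) \<le> dn k j * norm e ^ j"
        using tnorm_props(1)[OF mlinD[OF jp], of "yt k" e] dn_tn by simp
      then show "norm ((1 / fact j) *\<^sub>R (D j (yt k) (replicate j e) - Ds j (yt k) (replicate j e)))
          \<le> 1 / fact j * dn k j * norm e ^ j"
        by (simp add: divide_right_mono mult.assoc)
    qed
    finally have A: "norm (taylor_poly p D (yt k) (xt k) - taylor_poly p Ds (yt k) (xt k))
        \<le> (\<Sum>j\<le>p. 1 / fact j * dn k j * norm e ^ j)" using tp by simp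
    have B1: "norm (\<pi> (xt k) - taylor_poly p D (yt k) (xt k)) \<le> c * norm e ^ (p + 1)"
      using taylor_pi[of "xt k" "yt k"] by (simp add: c_def e_def)
    have B2: "norm (\<pi>s (xt k) - taylor_poly p Ds (yt k) (xt k)) \<le> c * norm e ^ (p + 1)"
      using taylor_pis[of "xt k" "yt k"] by (simp add: c_def e_def)
    have "Dl k = (\<pi> (xt k) - taylor_poly p D (yt k) (xt k)) - (\<pi>s (xt k) - taylor_poly p Ds (yt k) (xt k))
        + (taylor_poly p D (yt k) (xt k) - taylor_poly p Ds (yt k) (xt k))"
      by (simp add: Dl_def)
    then have "norm (Dl k) \<le> norm ((\<pi> (xt k) - taylor_poly p D (yt k) (xt k)) - (\<pi>s (xt k) - taylor_poly p Ds (yt k) (xt k)))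
        + norm (taylor_poly p D (yt k) (xt k) - taylor_poly p Ds (yt k) (xt k))"
      by (simp only: norm_triangle_ineq)
    moreover have "norm ((\<pi> (xt k) - taylor_poly p D (yt k) (xt k)) - (\<pi>s (xt k) - taylor_poly p Ds (yt k) (xt k)))
       \<le> norm (\<pi> (xt k) - taylor_poly p D (yt k) (xt k)) + norm (\<pi>s (xt k) - taylor_poly p Ds (yt k) (xt k))"
      by (rule norm_triangle_ineq4)
    ultimately show ?thesis using A B1 B2 unfolding e_def by linarith
  qed
  have DB: "norm (Dl k) \<le> N + 2 * c * z ^ (p + 1)"
    if z0: "0 \<le> z" and zh: "z \<le> 1/2" and ez: "norm (xt k - yt k) \<le> z"
      and vN: "\<And>j. j \<le> p \<Longrightarrow> v k j \<le> N" and N0: "0 \<le> N" for k z N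
  proof -
    let ?n = "norm (xt k - yt k)"
    have "(\<Sum>j\<le>p. 1 / fact j * dn k j * ?n ^ j) \<le> (\<Sum>j\<le>p. N / 2 * z ^ j)"
    proof (rule sum_mono)
      fix j assume "j \<in> {..p}"
      then have jp: "j \<le> p" by simp
      have "1 / fact j * dn k j = v k j / 2" by (simp add: v_def)
      also have "\<dots> \<le> N / 2" using vN[OF jp] by simp
      finally have a: "1 / fact j * dn k j \<le> N / 2" .
      have b: "?n ^ j \<le> z ^ j" using ez by (intro power_mono) auto
      show "1 / fact j * dn k j * ?n ^ j \<le> N / 2 * z ^ j"
        using a b dn0[OF jp] N0 by (intro mult_mono) auto
    qed
    also have "\<dots> = N / 2 * (\<Sum>j\<le>p. z ^ j)" by (simp add: sum_distrib_left)
    also have "\<dots> \<le> N / 2 * 2" using geom_le2[OF z0 zh, of p] N0 by (intro mult_left_mono) auto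
    finally have S: "(\<Sum>j\<le>p. 1 / fact j * dn k j * ?n ^ j) \<le> N" by simp
    have "?n ^ (p + 1) \<le> z ^ (p + 1)" using ez by (intro power_mono) auto
    then have "2 * c * ?n ^ (p + 1) \<le> 2 * c * z ^ (p + 1)" using c0 by (intro mult_left_mono) auto
    then show ?thesis using Fd[of k] S by linarith
  qed
  have Zset: "{\<mu> * (2 / fact j * dn k j) powr (1 / r) | k j. k < t \<and> j \<le> p}
      = (\<lambda>(k, j). \<mu> * v k j powr (1 / r)) ` ({..<t} \<times> {..p})" for t
    by (auto simp: v_def)
  have Zfin: "finite {\<mu> * (2 / fact j * dn k j) powr (1 / r) | k j. k < t \<and> j \<le> p}" for t
    unfolding Zset by simp
  have Zne: "{\<mu> * (2 / fact j * dn k j) powr (1 / r) | k j. k < t \<and> j \<le> p} \<noteq> {}" if "1 \<le> t" for t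
  proof -
    have "(0::nat, 0::nat) \<in> {..<t} \<times> {..p}" using that by auto
    then show ?thesis unfolding Zset by blast
  qed
  have Zge: "\<mu> * v k j powr (1 / r) \<le> Z t" if "k < t" "j \<le> p" for k j t
    unfolding Z_def by (rule Max_ge[OF Zfin]) (use that in \<open>auto simp: v_def\<close>)
  have Zmem: "\<exists>k j. k < t \<and> j \<le> p \<and> Z t = \<mu> * v k j powr (1 / r)" if "1 \<le> t" for t
  proof -
    have "Z t \<in> {\<mu> * (2 / fact j * dn k j) powr (1 / r) | k j. k < t \<and> j \<le> p}"
      unfolding Z_def by (rule Max_in[OF Zfin Zne[OF that]])
    then show ?thesis by (auto simp: v_def)
  qed
  have Z0: "0 \<le> Z t" if "1 \<le> t" for t
  proof -
    have "0 \<le> \<mu> * v 0 0 powr (1 / r)" using mu by simp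
    also have "\<dots> \<le> Z t" using that by (intro Zge) auto
    finally show ?thesis .
  qed
  have ZA: "Z t \<le> \<alpha>" if t1: "1 \<le> t" and tT: "t \<le> T" for t
  proof -
    obtain k j where kj: "k < t" "j \<le> p" "Z t = \<mu> * v k j powr (1 / r)" using Zmem[OF t1] by blast
    then show ?thesis using H1[of k j] tT by (simp add: v_def)
  qed
  have Zmono: "Z s \<le> Z t" if s1: "1 \<le> s" and st: "s \<le> t" for s t
  proof -
    obtain k j where kj: "k < s" "j \<le> p" "Z s = \<mu> * v k j powr (1 / r)" using Zmem[OF s1] by blast
    then show ?thesis using Zge[of k t j] st by simp
  qed
  have vZ: "v k j \<le> (Z t / \<mu>) powr r" if "k < t" "j \<le> p" for k j t
  proof -
    have "v k j powr (1 / r) \<le> Z t / \<mu>" using Zge[OF that] mu by (simp add: field_simps)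
    then have "(v k j powr (1 / r)) powr r \<le> (Z t / \<mu>) powr r"
      using r0 by (intro powr_mono2) auto
    moreover have "(v k j powr (1 / r)) powr r = v k j"
      using r0 v0[OF that(2)] by (simp add: powr_powr)
    ultimately show ?thesis by simp
  qed
  have zpow: "(\<mu> * N powr (1 / r)) ^ (p + 1) = \<mu> ^ (p + 1) * N powr ((real p + 1) / r)"
    if "0 \<le> N" for N
  proof (cases "N = 0")
    case True
    then show ?thesis by simp
  next
    case False
    then have Np: "N > 0" using that by simp
    have "(N powr (1 / r)) ^ (p + 1) = (N powr (1 / r)) powr (real (p + 1))"
      using Np by (simp only: powr_realpow powr_gt_zero)
    also have "\<dots> = N powr ((real p + 1) / r)" by (simp add: powr_powr add.commute)
    finally show ?thesis by (simp add: power_mult_distrib)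
  qed
  have EB: "norm (Dl k) \<le> \<eta>" if kT: "k < T" and ek: "norm (xt k - yt k) \<le> Z (Suc k)" for k
  proof -
    obtain k' j' where kj: "k' < Suc k" "j' \<le> p" "Z (Suc k) = \<mu> * v k' j' powr (1 / r)"
      using Zmem[of "Suc k"] by auto
    define N where "N = v k' j'"
    have N0: "0 \<le> N" using v0[OF kj(2)] by (simp add: N_def)
    have vN: "v k j \<le> N" if "j \<le> p" for j
      using vZ[of k "Suc k" j] that kj(3) mu r0 v0[OF kj(2)]
      by (simp add: N_def powr_powr)
    have "norm (Dl k) \<le> N + 2 * c * Z (Suc k) ^ (p + 1)"
      using DB[OF Z0[of "Suc k"] _ ek vN N0] ZA[of "Suc k"] kT alpha by auto
    also have "\<dots> = 2 * L * \<mu> ^ (p + 1) / fact (p + 1) * (2 / fact j' * dn k' j') powr ((real p + 1) / r)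
          + 2 / fact j' * dn k' j'"
      using zpow[OF N0] kj(3) by (simp add: N_def c_def v_def)
    also have "\<dots> \<le> \<eta>" using H2[of k' j'] kj kT by simp
    finally show ?thesis .
  qed
  have KL: "class_KL \<beta>" and Kg: "class_K \<gamma>"
    and iss: "\<And>\<Delta> t. (\<forall>s. norm (\<Delta> s) \<le> \<eta>) \<Longrightarrow>
        norm (traj f \<pi>s \<xi> \<Delta> t - ctraj f \<pi>s \<xi> t) \<le> \<beta> (norm (\<xi> - \<xi>)) t + \<gamma> (maxpert \<Delta> t)"
  proof -
    show "class_KL \<beta>" "class_K \<gamma>" using ISS unfolding locally_delta_ISS_def by auto
    have all: "\<forall>\<xi>1\<in>X. \<forall>\<xi>2\<in>X. \<forall>\<Delta> t. (\<forall>s. norm (\<Delta> s) \<le> \<eta>) \<longrightarrow>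
        norm (traj f \<pi>s \<xi>1 \<Delta> t - ctraj f \<pi>s \<xi>2 t) \<le> \<beta> (norm (\<xi>1 - \<xi>2)) t + \<gamma> (maxpert \<Delta> t)"
      using ISS unfolding locally_delta_ISS_def by blast
    show "\<And>\<Delta> t. (\<forall>s. norm (\<Delta> s) \<le> \<eta>) \<Longrightarrow>
        norm (traj f \<pi>s \<xi> \<Delta> t - ctraj f \<pi>s \<xi> t) \<le> \<beta> (norm (\<xi> - \<xi>)) t + \<gamma> (maxpert \<Delta> t)"
      using all xi by blast
  qed
  have beta0: "\<beta> 0 t = 0" for t using KL by (simp add: class_KL_def class_K_def)
  have sm: "strict_mono_on {0..} \<gamma>" using Kg by (simp add: class_K_def)
  have main: "t \<le> T \<Longrightarrow> norm (xt t - yt t) \<le> (if t = 0 then 0 else Z t)" for t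
  proof (induction t rule: less_induct)
    case (less t)
    show ?case
    proof (cases t)
      case 0
      then show ?thesis by (simp add: xt_def yt_def ctraj_def)
    next
      case (Suc s)
      define z where "z = Z t"
      have t1: "1 \<le> t" using Suc by simp
      have z0: "0 \<le> z" using Z0[OF t1] by (simp add: z_def)
      have zA: "z \<le> \<alpha>" using ZA[OF t1 less.prems] by (simp add: z_def)
      have ek: "norm (xt k - yt k) \<le> z" if "k < t" for k
      proof -
        have "norm (xt k - yt k) \<le> (if k = 0 then 0 else Z k)" using less.IH[of k] that less.prems by simp
        then show ?thesis using z0 Zmono[of k t] that by (auto simp: z_def split: if_splits)
      qed
      have ek1: "norm (xt k - yt k) \<le> Z (Suc k)" if "k < t" for k
      proof -
        have "norm (xt k - yt k) \<le> (if k = 0 then 0 else Z k)" using less.IH[of k] that less.prems by simp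
        then show ?thesis using Z0[of "Suc k"] Zmono[of k "Suc k"] by (auto split: if_splits)
      qed
      define N where "N = (z / \<mu>) powr r"
      define W where "W = N + 2 * c * z ^ (p + 1)"
      have N0: "0 \<le> N" by (simp add: N_def)
      have W0: "0 \<le> W" using N0 c0 z0 by (simp add: W_def)
      have DW: "norm (Dl k) \<le> W" if "k < t" for k
        unfolding W_def
        by (rule DB[OF z0 _ ek[OF that] _ N0])
           (use zA alpha vZ[OF that] in \<open>auto simp: N_def z_def\<close>)
      have gW: "\<gamma> W \<le> z"
      proof (rule gamma_le[OF Kg W0 z0])
        show "ereal W \<le> gamma_inv \<gamma> z"
          using gamma_inv_cond[OF z0 zA] by (simp add: W_def N_def c_def add.commute)
      qed
      define Dt where "Dt = (\<lambda>s. if s < t then \<pi> (ctraj f \<pi> \<xi> s) - \<pi>s (ctraj f \<pi> \<xi> s) else 0)"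
      have Dt_le: "norm (Dt s) \<le> \<eta>" for s
        using EB[of s] ek1[of s] less.prems eta by (auto simp: Dt_def Dl_def xt_def)
      have tr: "traj f \<pi>s \<xi> Dt t = xt t"
        unfolding Dt_def xt_def by (rule traj_truncate) simp
      have mp: "maxpert Dt t \<le> W"
      proof -
        have eq: "insert 0 {norm (Dt k) |k. k < t} = insert 0 ((\<lambda>k. norm (Dt k)) ` {..<t})" by auto
        show ?thesis unfolding maxpert_def eq
          using DW W0 by (intro Max.boundedI) (auto simp: Dt_def Dl_def xt_def)
      qed
      have mp0: "0 \<le> maxpert Dt t"
        unfolding maxpert_def by (rule Max_ge) auto
      have "norm (xt t - yt t) \<le> \<beta> (norm (\<xi> - \<xi>)) t + \<gamma> (maxpert Dt t)"
        using iss[of Dt t] Dt_le tr by (simp add: yt_def)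
      also have "\<dots> = \<gamma> (maxpert Dt t)" using beta0 by simp
      also have "\<dots> \<le> \<gamma> W" using strict_mono_on_leD[OF sm, of "maxpert Dt t" W] mp mp0 W0 by simp
      also have "\<dots> \<le> z" by (rule gW)
      finally show ?thesis using Suc by (simp add: z_def)
    qed
  qed
  show ?thesis
  proof (intro allI impI)
    fix t assume t: "1 \<le> t \<and> t \<le> T"
    have "norm (ctraj f \<pi>s \<xi> t - ctraj f \<pi> \<xi> t) = norm (xt t - yt t)"
      by (simp add: xt_def yt_def norm_minus_commute)
    also have "\<dots> \<le> Z t" using main[of t] t by simp
    finally show "norm (ctraj f \<pi>s \<xi> t - ctraj f \<pi> \<xi> t)
       \<le> Max {\<mu> * (2 / fact j * dn k j) powr (1 / r) | k j. k < t \<and> j \<le> p}"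
      by (simp add: Z_def)
  qed
qed

end
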